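(* Let $T$ be an isometry of a compact metric space $(X,d)$ and let $\mu$ be an ergodic $T$-invariant Borel probability. Then for all $\alpha\in(1,\infty)$, $\delta>0$, $\kappa>\kappa'>0$ and $N\in\mathbb{N}$, \[\min_{\mu'}\max_{U:\,\mu'(U)\ge\kappa}\mathrm{cov}_{\kappa'}((U,d,\mu'),2\delta)\ \le\ \mathrm{BICOV}_{\alpha,\kappa,\kappa',\delta N}\big(X,d^{\mathbf{X}}_{[-N;0)},d^{\mathbf{X}}_{[0;N)},\mu\big)\ \le\ \min_{\mu'}\max_{U:\,\mu'(U)\ge\kappa}\mathrm{cov}_{\kappa'}((U,d,\mu'),\delta),\] where in both outer expressions the minimum is over Borel probabilities $\mu'$ on $X$ with $\|d\mu'/d\mu\|_\infty\le\alpha$ and the maximum over Borel $U\subseteq X$.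
   Context: $d^{\mathbf{X}}_F(x,x')=\sum_{n\in F}d(T^nx,T^nx')$. $B^d_r(x)=\{y:d(x,y)<r\}$, $B^d_r(F)=\bigcup_{x\in F}B^d_r(x)$. For $U\subseteq X$ and a measure $\mu'$, $\mathrm{cov}_a((U,d,\mu'),r)=\min\{|F|:F\subseteq U,\ \mu'(U\cap B^d_r(F))>a\}$. $\mathrm{bicov}_a((X,d_1,d_2,\mu),\delta)=\min\{|F|:F\subseteq X,\ \mu(B^{d_2}_\delta(B^{d_1}_\delta(F)))>a\}$, and for $U\subseteq X$, $(U,d_1,d_2,\mu')$ means $U$ with restricted pseudometrics (balls inside $U$) and unnormalized restriction of $\mu'$. $\mathrm{BICOV}_{\alpha,\kappa,\kappa',\delta}(X,d_1,d_2,\mu)=\min_{\mu'}\max_{U:\mu'(U)\ge\kappa}\mathrm{bicov}_{\kappa'}((U,d_1,d_2,\mu'),\delta)$, min over Borel probabilities $\mu'$ with $\|d\mu'/d\mu\|_\infty\le\alpha$, max over Borel $U$. *)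

theory Defs
  imports "HOL-Probability.Probability"
begin

definition tpow :: "('a \<Rightarrow> 'a) \<Rightarrow> int \<Rightarrow> 'a \<Rightarrow> 'a" where
  "tpow T n = (if n \<ge> 0 then T ^^ nat n else (inv T) ^^ nat (- n))"

definition dynd :: "('a::metric_space \<Rightarrow> 'a) \<Rightarrow> int set \<Rightarrow> 'a \<Rightarrow> 'a \<Rightarrow> real" where
  "dynd T F x y = (\<Sum>n\<in>F. dist (tpow T n x) (tpow T n y))"

definition rball :: "'a set \<Rightarrow> ('a \<Rightarrow> 'a \<Rightarrow> real) \<Rightarrow> real \<Rightarrow> 'a set \<Rightarrow> 'a set" where
  "rball U d r F = {y \<in> U. \<exists>x\<in>F. d x y < r}"

definition cov :: "'a measure \<Rightarrow> 'a set \<Rightarrow> ('a \<Rightarrow> 'a \<Rightarrow> real) \<Rightarrow> real \<Rightarrow> real \<Rightarrow> enat" where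
  "cov \<mu>' U d a r = Inf {enat (card F) | F. finite F \<and> F \<subseteq> U \<and> measure \<mu>' (rball U d r F) > a}"

definition bicov :: "'a measure \<Rightarrow> 'a set \<Rightarrow> ('a \<Rightarrow> 'a \<Rightarrow> real) \<Rightarrow> ('a \<Rightarrow> 'a \<Rightarrow> real)
    \<Rightarrow> real \<Rightarrow> real \<Rightarrow> enat" where
  "bicov \<mu>' U d1 d2 a \<delta> = Inf {enat (card F) | F. finite F \<and> F \<subseteq> U \<and>
      measure \<mu>' (rball U d2 \<delta> (rball U d1 \<delta> F)) > a}"

definition admissible :: "'a::topological_space measure \<Rightarrow> real \<Rightarrow> 'a measure \<Rightarrow> bool" where
  "admissible \<mu> \<alpha> \<mu>' \<longleftrightarrow> prob_space \<mu>' \<and> sets \<mu>' = sets borel \<and>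
     (\<exists>f \<in> borel_measurable \<mu>. \<mu>' = density \<mu> f \<and> (AE x in \<mu>. f x \<le> ennreal \<alpha>))"

definition COV :: "real \<Rightarrow> real \<Rightarrow> real \<Rightarrow> real \<Rightarrow> ('a::topological_space \<Rightarrow> 'a \<Rightarrow> real)
    \<Rightarrow> 'a measure \<Rightarrow> enat" where
  "COV \<alpha> \<kappa> \<kappa>' r d \<mu> = (INF \<mu>'\<in>{\<mu>'. admissible \<mu> \<alpha> \<mu>'}.
      SUP U\<in>{U \<in> sets borel. measure \<mu>' U \<ge> \<kappa>}. cov \<mu>' U d \<kappa>' r)"

definition BICOV :: "real \<Rightarrow> real \<Rightarrow> real \<Rightarrow> real \<Rightarrow> ('a::topological_space \<Rightarrow> 'a \<Rightarrow> real)
    \<Rightarrow> ('a \<Rightarrow> 'a \<Rightarrow> real) \<Rightarrow> 'a measure \<Rightarrow> enat" where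
  "BICOV \<alpha> \<kappa> \<kappa>' \<delta> d1 d2 \<mu> = (INF \<mu>'\<in>{\<mu>'. admissible \<mu> \<alpha> \<mu>'}.
      SUP U\<in>{U \<in> sets borel. measure \<mu>' U \<ge> \<kappa>}. bicov \<mu>' U d1 d2 \<kappa>' \<delta>)"

definition invariant_measure :: "'a measure \<Rightarrow> ('a \<Rightarrow> 'a) \<Rightarrow> bool" where
  "invariant_measure M T \<longleftrightarrow> T \<in> measurable M M \<and> distr M M T = M"

definition ergodic :: "'a measure \<Rightarrow> ('a \<Rightarrow> 'a) \<Rightarrow> bool" where
  "ergodic M T \<longleftrightarrow> (\<forall>A\<in>sets M. T -` A \<inter> space M = A \<longrightarrow> measure M A = 0 \<or> measure M A = 1)"

end

theory Submission
  imports Defs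
begin

lemma iter_iso:
  fixes T :: "'a::metric_space \<Rightarrow> 'a"
  assumes "\<And>x y. dist (T x) (T y) = dist x y"
  shows "dist ((T^^n) x) ((T^^n) x') = dist x x'"
proof (induction n)
  case 0 show ?case by simp
next
  case (Suc n) then show ?case by (simp add: assms)
qed

lemma isometry_compact_surj:
  fixes T :: "'a::metric_space \<Rightarrow> 'a"
  assumes cpt: "compact (UNIV::'a set)" and iso: "\<And>x y. dist (T x) (T y) = dist x y"
  shows "surj T"
proof (rule ccontr)
  assume "\<not> surj T"
  then obtain y where y: "y \<notin> range T" by auto
  have cont: "continuous_on UNIV T"
    unfolding continuous_on_iff by (metis iso)
  have "compact (range T)" using compact_continuous_image[OF cont cpt] .
  hence "closed (range T)" by (rule compact_imp_closed)
  hence "open (- range T)" by auto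
  then obtain e where e: "e > 0" "\<forall>x'. dist x' y < e \<longrightarrow> x' \<in> - range T"
  proof -
    have "y \<in> - range T" using y by simp
    then obtain e where "e > 0" "\<forall>x'. dist x' y < e \<longrightarrow> x' \<in> - range T"
      using \<open>open (- range T)\<close> unfolding open_dist by blast
    then show ?thesis using that by blast
  qed
  have ez: "e \<le> dist y (T z)" for z
    using e(2)[rule_format, of "T z"] by (metis ComplD dist_commute not_le rangeI)
  define s where "s n = (T^^n) y" for n
  have sep: "e \<le> dist (s m) (s (m + Suc k))" for m k
  proof -
    have "s (m + Suc k) = (T^^m) ((T^^Suc k) y)" unfolding s_def by (simp only: funpow_add comp_def)
    hence "dist (s m) (s (m + Suc k)) = dist y ((T^^Suc k) y)"
      unfolding s_def by (simp add: iter_iso[OF iso])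
    also have "\<dots> = dist y (T ((T^^k) y))" by simp
    finally show ?thesis using ez by simp
  qed
  have "seq_compact (UNIV::'a set)" using cpt by (rule compact_imp_seq_compact)
  then obtain l r where r: "strict_mono r" "(s \<circ> r) \<longlonglongrightarrow> l"
    unfolding seq_compact_def by blast
  have "Cauchy (s \<circ> r)" using LIMSEQ_imp_Cauchy[OF r(2)] .
  then obtain M where M: "\<forall>m\<ge>M. \<forall>n\<ge>M. dist ((s \<circ> r) m) ((s \<circ> r) n) < e"
    unfolding Cauchy_def using e(1) by blast
  have "r M < r (Suc M)" using r(1) by (simp add: strict_mono_def)
  then obtain k where k: "r (Suc M) = Suc (r M + k)" by (auto dest: less_imp_Suc_add)
  have "dist (s (r M)) (s (r (Suc M))) < e" using M by auto
  with sep[of "r M" k] k show False by simp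
qed

lemma tpow_iso:
  fixes T :: "'a::metric_space \<Rightarrow> 'a"
  assumes iso: "\<And>x y. dist (T x) (T y) = dist x y" and s: "surj T"
  shows "dist (tpow T n x) (tpow T n x') = dist x x'"
proof -
  have iso': "dist (inv T a) (inv T b) = dist a b" for a b
  proof -
    have "dist (inv T a) (inv T b) = dist (T (inv T a)) (T (inv T b))" using iso by simp
    also have "\<dots> = dist a b" using surj_f_inv_f[OF s] by simp
    finally show ?thesis .
  qed
  show ?thesis
  proof (cases "n \<ge> 0")
    case True then show ?thesis unfolding tpow_def using iter_iso[OF iso] by simp
  next
    case False then show ?thesis unfolding tpow_def using iter_iso[of "inv T", OF iso'] by simp
  qed
qed

lemma dynd_eq:
  fixes T :: "'a::metric_space \<Rightarrow> 'a"
  assumes iso: "\<And>x y. dist (T x) (T y) = dist x y" and s: "surj T"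
  shows "dynd T {l..<u} = (\<lambda>x y. real (nat (u - l)) * dist x y)"
  by (rule ext)+ (simp add: dynd_def tpow_iso[OF iso s])

lemma rball_borel:
  fixes U :: "'a::metric_space set"
  assumes "U \<in> sets borel" "c > 0"
  shows "rball U (\<lambda>x y. c * dist x y) r G \<in> sets borel"
proof -
  have "rball U (\<lambda>x y. c * dist x y) r G = U \<inter> (\<Union>x\<in>G. ball x (r / c))"
    using assms(2) by (auto simp: rball_def field_simps)
  moreover have "open (\<Union>x\<in>G. ball x (r / c))" by auto
  ultimately show ?thesis using assms(1) by auto
qed

lemma pointwise:
  fixes U :: "'a::metric_space set" and \<mu>' :: "'a measure"
  assumes U: "U \<in> sets borel" and fm: "finite_measure \<mu>'" and sb: "sets \<mu>' = sets borel"
    and c: "c > 0" and \<delta>: "\<delta> > 0"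
  shows "cov \<mu>' U dist a (2 * \<delta>) \<le> bicov \<mu>' U (\<lambda>x y. c * dist x y) (\<lambda>x y. c * dist x y) a (\<delta> * c)
       \<and> bicov \<mu>' U (\<lambda>x y. c * dist x y) (\<lambda>x y. c * dist x y) a (\<delta> * c) \<le> cov \<mu>' U dist a \<delta>"
proof -
  let ?D = "\<lambda>x y. c * dist x y"
  have incl1: "rball U dist \<delta> F \<subseteq> rball U ?D (\<delta> * c) (rball U ?D (\<delta> * c) F)" if "F \<subseteq> U" for F
  proof
    fix y assume "y \<in> rball U dist \<delta> F"
    then obtain x where x: "y \<in> U" "x \<in> F" "dist x y < \<delta>" by (auto simp: rball_def)
    have "x \<in> rball U ?D (\<delta> * c) F" unfolding rball_def
      using x that c \<delta> by (auto intro!: bexI[of _ x])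
    moreover have "c * dist x y < \<delta> * c" using x c by (simp add: mult.commute)
    ultimately show "y \<in> rball U ?D (\<delta> * c) (rball U ?D (\<delta> * c) F)"
      using x by (auto simp: rball_def)
  qed
  have incl2: "rball U ?D (\<delta> * c) (rball U ?D (\<delta> * c) F) \<subseteq> rball U dist (2 * \<delta>) F" for F
  proof
    fix y assume "y \<in> rball U ?D (\<delta> * c) (rball U ?D (\<delta> * c) F)"
    then obtain z x where zx: "y \<in> U" "x \<in> F" "c * dist x z < \<delta> * c" "c * dist z y < \<delta> * c"
      by (auto simp: rball_def)
    have "dist x z < \<delta>" "dist z y < \<delta>" using zx c by (simp_all add: mult.commute)
    hence "dist x y < 2 * \<delta>" using dist_triangle[of x y z] by linarith
    thus "y \<in> rball U dist (2 * \<delta>) F" using zx by (auto simp: rball_def)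
  qed
  have bor1: "rball U dist r F \<in> sets \<mu>'" for r F
    using rball_borel[OF U, of 1 r F] sb by simp
  have bor2: "rball U ?D (\<delta> * c) (rball U ?D (\<delta> * c) F) \<in> sets \<mu>'" for F
    using rball_borel[OF U c] sb by simp
  have m1: "measure \<mu>' (rball U dist \<delta> F) \<le> measure \<mu>' (rball U ?D (\<delta> * c) (rball U ?D (\<delta> * c) F))"
    if "F \<subseteq> U" for F
    using finite_measure.finite_measure_mono[OF fm incl1[OF that] bor2] .
  have m2: "measure \<mu>' (rball U ?D (\<delta> * c) (rball U ?D (\<delta> * c) F)) \<le> measure \<mu>' (rball U dist (2 * \<delta>) F)" for F
    using finite_measure.finite_measure_mono[OF fm incl2 bor1] .
  show ?thesis unfolding cov_def bicov_def
  proof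
    show "Inf {enat (card F) |F. finite F \<and> F \<subseteq> U \<and> a < measure \<mu>' (rball U dist (2 * \<delta>) F)}
      \<le> Inf {enat (card F) |F. finite F \<and> F \<subseteq> U \<and> a < measure \<mu>' (rball U ?D (\<delta> * c) (rball U ?D (\<delta> * c) F))}"
    proof (rule Inf_superset_mono, rule subsetI)
      fix n assume "n \<in> {enat (card F) |F. finite F \<and> F \<subseteq> U \<and> a < measure \<mu>' (rball U ?D (\<delta> * c) (rball U ?D (\<delta> * c) F))}"
      then obtain F where F: "n = enat (card F)" "finite F" "F \<subseteq> U" "a < measure \<mu>' (rball U ?D (\<delta> * c) (rball U ?D (\<delta> * c) F))"
        by blast
      have "a < measure \<mu>' (rball U dist (2 * \<delta>) F)" using F(4) m2[of F] by linarith
      then show "n \<in> {enat (card F) |F. finite F \<and> F \<subseteq> U \<and> a < measure \<mu>' (rball U dist (2 * \<delta>) F)}"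
        using F by blast
    qed
    show "Inf {enat (card F) |F. finite F \<and> F \<subseteq> U \<and> a < measure \<mu>' (rball U ?D (\<delta> * c) (rball U ?D (\<delta> * c) F))}
      \<le> Inf {enat (card F) |F. finite F \<and> F \<subseteq> U \<and> a < measure \<mu>' (rball U dist \<delta> F)}"
    proof (rule Inf_superset_mono, rule subsetI)
      fix n assume "n \<in> {enat (card F) |F. finite F \<and> F \<subseteq> U \<and> a < measure \<mu>' (rball U dist \<delta> F)}"
      then obtain F where F: "n = enat (card F)" "finite F" "F \<subseteq> U" "a < measure \<mu>' (rball U dist \<delta> F)"
        by blast
      have "a < measure \<mu>' (rball U ?D (\<delta> * c) (rball U ?D (\<delta> * c) F))" using F(4) m1[OF F(3)] by linarith
      then show "n \<in> {enat (card F) |F. finite F \<and> F \<subseteq> U \<and> a < measure \<mu>' (rball U ?D (\<delta> * c) (rball U ?D (\<delta> * c) F))}"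
        using F by blast
    qed
  qed
qed

theorem mainTheorem7:
  fixes T :: "'a::metric_space \<Rightarrow> 'a" and \<mu> :: "'a measure"
    and \<alpha> \<delta> \<kappa> \<kappa>' :: real and N :: nat
  assumes "compact (UNIV :: 'a set)"
    and "\<And>x y. dist (T x) (T y) = dist x y"
    and "prob_space \<mu>" and "sets \<mu> = sets borel"
    and "invariant_measure \<mu> T"
    and "ergodic \<mu> T"
    and "\<alpha> > 1" and "\<delta> > 0" and "\<kappa> > \<kappa>'" and "\<kappa>' > 0" and "N \<ge> 1"
  shows "COV \<alpha> \<kappa> \<kappa>' (2 * \<delta>) dist \<mu>
           \<le> BICOV \<alpha> \<kappa> \<kappa>' (\<delta> * real N) (dynd T {- int N..<0}) (dynd T {0..<int N}) \<mu>
       \<and> BICOV \<alpha> \<kappa> \<kappa>' (\<delta> * real N) (dynd T {- int N..<0}) (dynd T {0..<int N}) \<mu>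
           \<le> COV \<alpha> \<kappa> \<kappa>' \<delta> dist \<mu>"
proof -
  have s: "surj T" by (rule isometry_compact_surj[OF assms(1) assms(2)])
  have d1: "dynd T {- int N..<0} = (\<lambda>x y. real N * dist x y)"
    using dynd_eq[OF assms(2) s, of "- int N" 0] by simp
  have d2: "dynd T {0..<int N} = (\<lambda>x y. real N * dist x y)"
    using dynd_eq[OF assms(2) s, of 0 "int N"] by simp
  have c: "real N > 0" using assms(11) by simp
  have P: "cov \<mu>' U dist \<kappa>' (2 * \<delta>) \<le> bicov \<mu>' U (\<lambda>x y. real N * dist x y) (\<lambda>x y. real N * dist x y) \<kappa>' (\<delta> * real N)
       \<and> bicov \<mu>' U (\<lambda>x y. real N * dist x y) (\<lambda>x y. real N * dist x y) \<kappa>' (\<delta> * real N) \<le> cov \<mu>' U dist \<kappa>' \<delta>"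
    if "admissible \<mu> \<alpha> \<mu>'" "U \<in> sets borel" for \<mu>' U
  proof -
    have ps: "prob_space \<mu>'" and sb: "sets \<mu>' = sets borel" using that(1) unfolding admissible_def by simp_all
    have fm: "finite_measure \<mu>'" using prob_space.finite_measure[OF ps] .
    show ?thesis by (rule pointwise[OF that(2) fm sb c assms(8)])
  qed
  show ?thesis unfolding COV_def BICOV_def d1 d2
  proof
    show "(INF \<mu>'\<in>{\<mu>'. admissible \<mu> \<alpha> \<mu>'}. SUP U\<in>{U \<in> sets borel. \<kappa> \<le> measure \<mu>' U}. cov \<mu>' U dist \<kappa>' (2 * \<delta>))
      \<le> (INF \<mu>'\<in>{\<mu>'. admissible \<mu> \<alpha> \<mu>'}. SUP U\<in>{U \<in> sets borel. \<kappa> \<le> measure \<mu>' U}.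
          bicov \<mu>' U (\<lambda>x y. real N * dist x y) (\<lambda>x y. real N * dist x y) \<kappa>' (\<delta> * real N))"
      by (rule INF_superset_mono[OF order_refl], rule SUP_subset_mono[OF order_refl]) (use P in auto)
    show "(INF \<mu>'\<in>{\<mu>'. admissible \<mu> \<alpha> \<mu>'}. SUP U\<in>{U \<in> sets borel. \<kappa> \<le> measure \<mu>' U}.
          bicov \<mu>' U (\<lambda>x y. real N * dist x y) (\<lambda>x y. real N * dist x y) \<kappa>' (\<delta> * real N))
      \<le> (INF \<mu>'\<in>{\<mu>'. admissible \<mu> \<alpha> \<mu>'}. SUP U\<in>{U \<in> sets borel. \<kappa> \<le> measure \<mu>' U}. cov \<mu>' U dist \<kappa>' \<delta>)"
      by (rule INF_superset_mono[OF order_refl], rule SUP_subset_mono[OF order_refl]) (use P in auto)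
  qed
qed

end
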